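(* Let $\ell=\ell(n)$ be positive integers with $\ell\mid n$ and $\ell=o(n)$. Let $T^*$ be the minimum, over all fitness-dependent mutation rate sequences $(p_0,\dots,p_{n/\ell-1})\in(0,1)^{n/\ell}$, of the expected runtime of the (1+1) EA on $\mathrm{BLO}_\ell$. Then, as $n\to\infty$, \[ T^*=(1+o(1))\,\frac{e}{2}\cdot\frac{b2^\ell}{\ell}\,n^2. \]
   Context: For $\ell\ge1$ let $s(\ell)=\sum_{j=1}^\ell\binom{\ell}{j}\frac1j$ and $b=s(\ell)/2^{\ell+1}$. For $x\in\{0,1\}^n$ with $\ell\mid n$, $\mathrm{BLO}_\ell(x)=\sum_{m=1}^{n/\ell}\prod_{i=1}^{m\ell}x_i$. The (1+1) EA with fitness-dependent rates $(p_m)$: $x_0$ uniform on $\{0,1\}^n$; in each iteration an offspring $y$ is created from the current $x$ by flipping each bit independently with probability $p_{\mathrm{BLO}_\ell(x)}$, and $y$ replaces $x$ iff $\mathrm{BLO}_\ell(y)\ge\mathrm{BLO}_\ell(x)$. The runtime is the number of iterations until the current individual first has fitness $n/\ell$ (zero if $x_0$ already does); its expectation is $\sum_{m=0}^{n/\ell-1}(1-p_m)^{-m\ell}\sum_{j=1}^{\ell}\binom{\ell}{j}\frac{1}{1-(1-2p_m)^j}$. *)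

theory Defs
  imports Complex_Main "HOL-Library.Landau_Symbols"
begin

definition s_BLO :: "nat \<Rightarrow> real" where
  "s_BLO l = (\<Sum>j=1..l. real (l choose j) / real j)"

definition b_BLO :: "nat \<Rightarrow> real" where
  "b_BLO l = s_BLO l / 2 ^ (l + 1)"

definition exp_runtime :: "nat \<Rightarrow> nat \<Rightarrow> (nat \<Rightarrow> real) \<Rightarrow> real" where
  "exp_runtime n l p =
     (\<Sum>m<n div l. inverse ((1 - p m) ^ (m * l)) *
        (\<Sum>j=1..l. real (l choose j) / (1 - (1 - 2 * p m) ^ j)))"

definition T_opt :: "nat \<Rightarrow> nat \<Rightarrow> real" where
  "T_opt n l = Inf {exp_runtime n l p | p. \<forall>m<n div l. 0 < p m \<and> p m < 1}"

end

theory Submission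
  imports Defs "HOL-Library.Landau_Symbols"
begin

lemma bern_aux:
  fixes y :: real
  assumes "-1 \<le> y" "y \<le> 1"
  shows "1 - y ^ j \<le> real j * (1 - y)"
proof (induction j)
  case 0 then show ?case by simp
next
  case (Suc j)
  have "\<bar>y\<bar> ^ j \<le> 1" using assms by (intro power_le_one) auto
  hence "y ^ j \<le> 1" by (metis abs_ge_self order.trans power_abs)
  hence "y ^ j * (1 - y) \<le> 1 * (1 - y)" using assms by (intro mult_right_mono) auto
  then show ?case using Suc by (simp add: algebra_simps)
qed

lemma denom_pos:
  fixes p :: real
  assumes "0 < p" "p < 1" "j \<ge> 1"
  shows "0 < 1 - (1 - 2 * p) ^ j"
proof -
  have a: "\<bar>1 - 2 * p\<bar> < 1" using assms by auto
  have "\<bar>1 - 2 * p\<bar> ^ j \<le> \<bar>1 - 2 * p\<bar> ^ 1"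
    using a assms by (intro power_decreasing) auto
  hence "(1 - 2 * p) ^ j < 1" using a
    by (metis abs_ge_self order.strict_trans1 power_abs power_one_right)
  thus ?thesis by simp
qed

lemma denom_upper:
  fixes p :: real
  assumes "0 < p" "p < 1"
  shows "1 - (1 - 2 * p) ^ j \<le> 2 * p * real j"
  using bern_aux[of "1 - 2 * p" j] assms by (simp add: algebra_simps)

lemma pow_aux:
  fixes x :: real
  assumes "0 \<le> x" "x \<le> 1"
  shows "(1 - x) ^ j * (1 + real j * x) \<le> 1"
proof (induction j)
  case 0 then show ?case by simp
next
  case (Suc j)
  have "(1 - x) * (1 + real (Suc j) * x) \<le> 1 + real j * x"
    using assms by (simp add: algebra_simps)
  hence "(1 - x) ^ j * ((1 - x) * (1 + real (Suc j) * x)) \<le> (1 - x) ^ j * (1 + real j * x)"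
    using assms by (intro mult_left_mono) auto
  then show ?case using Suc by (simp add: algebra_simps)
qed

lemma denom_lower_inv:
  fixes x :: real
  assumes "0 < x" "x \<le> 1" "j \<ge> 1"
  shows "1 / (1 - (1 - x) ^ j) \<le> 1 / (real j * x) + 1"
proof -
  have jx: "real j * x > 0" using assms by auto
  have "(1 - x) ^ j * (1 + real j * x) \<le> 1" using pow_aux assms by auto
  hence h: "(1 - x) ^ j \<le> 1 / (1 + real j * x)" using jx by (simp add: field_simps)
  have "1 - (1 - x) ^ j \<ge> 1 - 1 / (1 + real j * x)" using h by linarith
  also have "1 - 1 / (1 + real j * x) = real j * x / (1 + real j * x)" using jx by (simp add: field_simps)
  finally have d: "1 - (1 - x) ^ j \<ge> real j * x / (1 + real j * x)" .
  have pos: "real j * x / (1 + real j * x) > 0" using jx by simp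
  have p2: "0 < 1 - (1 - x) ^ j" using d pos by linarith
  have "1 / (1 - (1 - x) ^ j) \<le> 1 / (real j * x / (1 + real j * x))"
    by (rule divide_left_mono[OF d]) (use p2 jx add_pos_pos[OF zero_less_one jx] in \<open>auto simp: zero_less_divide_iff zero_less_mult_iff\<close>)
  also have "\<dots> = 1 / (real j * x) + 1" using jx assms by (simp add: add_divide_distrib)
  finally show ?thesis .
qed

definition SS :: "nat \<Rightarrow> real \<Rightarrow> real" where
  "SS l p = (\<Sum>j=1..l. real (l choose j) / (1 - (1 - 2 * p) ^ j))"

lemma SS_lower:
  assumes "0 < p" "p < 1"
  shows "s_BLO l / (2 * p) \<le> SS l p"
proof -
  have "s_BLO l / (2 * p) = (\<Sum>j=1..l. real (l choose j) / (2 * p * real j))"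
    unfolding s_BLO_def sum_divide_distrib by (simp add: field_simps)
  also have "\<dots> \<le> SS l p" unfolding SS_def
  proof (rule sum_mono)
    fix j assume j: "j \<in> {1..l}"
    have "0 < 1 - (1 - 2 * p) ^ j" using denom_pos assms j by auto
    moreover have "1 - (1 - 2 * p) ^ j \<le> 2 * p * real j" using denom_upper assms by auto
    ultimately show "real (l choose j) / (2 * p * real j) \<le> real (l choose j) / (1 - (1 - 2 * p) ^ j)"
      by (intro divide_left_mono) auto
  qed
  finally show ?thesis .
qed

lemma s_ge: "l \<ge> 1 \<Longrightarrow> s_BLO l \<ge> real l"
proof -
  assume l: "l \<ge> 1"
  have "real (l choose 1) / real 1 \<le> (\<Sum>j=1..l. real (l choose j) / real j)"
    by (rule member_le_sum) (use l in auto)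
  thus ?thesis unfolding s_BLO_def by simp
qed

lemma pow2_le: "l \<ge> 1 \<Longrightarrow> (\<Sum>j=1..l. real (l choose j)) \<le> real l * s_BLO l"
proof -
  assume l: "l \<ge> 1"
  have "(\<Sum>j=1..l. real (l choose j)) \<le> (\<Sum>j=1..l. real l * (real (l choose j) / real j))"
  proof (rule sum_mono)
    fix j assume j: "j \<in> {1..l}"
    hence "real j \<le> real l" "real j > 0" by auto
    hence "1 \<le> real l / real j" by simp
    hence "1 * real (l choose j) \<le> real l / real j * real (l choose j)" by (intro mult_right_mono) auto
    thus "real (l choose j) \<le> real l * (real (l choose j) / real j)" by simp
  qed
  thus ?thesis unfolding s_BLO_def by (simp add: sum_distrib_left)
qed

lemma SS_upper:
  assumes "0 < p" "p \<le> 1/2" "l \<ge> 1"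
  shows "SS l p \<le> s_BLO l * (1 / (2 * p) + real l)"
proof -
  have "SS l p \<le> (\<Sum>j=1..l. real (l choose j) * (1 / (real j * (2 * p)) + 1))" unfolding SS_def
  proof (rule sum_mono)
    fix j assume j: "j \<in> {1..l}"
    have "1 / (1 - (1 - 2 * p) ^ j) \<le> 1 / (real j * (2 * p)) + 1"
      using denom_lower_inv[of "2 * p" j] assms j by auto
    hence "real (l choose j) * (1 / (1 - (1 - 2 * p) ^ j)) \<le> real (l choose j) * (1 / (real j * (2 * p)) + 1)"
      by (intro mult_left_mono) auto
    thus "real (l choose j) / (1 - (1 - 2 * p) ^ j) \<le> real (l choose j) * (1 / (real j * (2 * p)) + 1)" by simp
  qed
  also have "\<dots> = s_BLO l / (2 * p) + (\<Sum>j=1..l. real (l choose j))"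
    unfolding s_BLO_def sum.distrib sum_divide_distrib by (simp add: field_simps sum.distrib)
  also have "\<dots> \<le> s_BLO l / (2 * p) + real l * s_BLO l" using pow2_le assms by auto
  finally show ?thesis by (simp add: algebra_simps)
qed

lemma pk_bound:
  fixes p :: real
  assumes "0 < p" "p < 1"
  shows "exp 1 * real k * p * (1 - p) ^ k \<le> 1"
proof -
  have "(1 - p) ^ k \<le> exp (- p) ^ k"
    using assms by (intro power_mono) (use exp_ge_add_one_self[of "-p"] in auto)
  also have "\<dots> = exp (- (real k * p))" by (simp add: exp_of_nat_mult[symmetric] )
  finally have a: "(1 - p) ^ k \<le> exp (- (real k * p))" .
  have "exp 1 * real k * p * (1 - p) ^ k \<le> exp 1 * real k * p * exp (- (real k * p))"
    using a assms by (intro mult_left_mono) auto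
  also have "\<dots> = (real k * p) * exp (1 - real k * p)" by (simp add: exp_diff exp_minus field_simps)
  also have "\<dots> \<le> exp (real k * p - 1) * exp (1 - real k * p)"
    using exp_ge_add_one_self[of "real k * p - 1"] by (intro mult_right_mono) auto
  also have "\<dots> = 1" by (simp add: exp_add[symmetric])
  finally show ?thesis .
qed

lemma term_lower:
  fixes p :: real
  assumes "0 < p" "p < 1"
  shows "exp 1 * s_BLO l * real k / 2 \<le> inverse ((1 - p) ^ k) * SS l p"
proof -
  have q: "(1 - p) ^ k > 0" using assms by auto
  have s: "s_BLO l \<ge> 0" unfolding s_BLO_def by (intro sum_nonneg) auto
  have "exp 1 * real k \<le> inverse ((1 - p) ^ k) / p"
    using pk_bound[OF assms, of k] q assms by (simp add: field_simps)
  hence "exp 1 * real k * (s_BLO l / 2) \<le> inverse ((1 - p) ^ k) / p * (s_BLO l / 2)"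
    using s by (intro mult_right_mono) auto
  also have "\<dots> = inverse ((1 - p) ^ k) * (s_BLO l / (2 * p))" by simp
  also have "\<dots> \<le> inverse ((1 - p) ^ k) * SS l p"
    using SS_lower[OF assms] q by (intro mult_left_mono) auto
  finally show ?thesis by (simp add: ac_simps)
qed

lemma inv_pow_le:
  "inverse ((1 - 1 / (real k + 2)) ^ k) \<le> exp 1"
proof -
  have "inverse (1 - 1 / (real k + 2)) = 1 + 1 / (real k + 1)" by (simp add: field_simps)
  hence "inverse ((1 - 1 / (real k + 2)) ^ k) = (1 + 1 / (real k + 1)) ^ k"
    by (simp add: power_inverse[symmetric])
  also have "\<dots> \<le> exp (1 / (real k + 1)) ^ k"
    by (intro power_mono) (use exp_ge_add_one_self[of "1 / (real k + 1)"] in auto)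
  also have "\<dots> = exp (real k / (real k + 1))" by (simp add: exp_of_nat_mult[symmetric])
  also have "\<dots> \<le> exp 1" by simp
  finally show ?thesis .
qed

lemma sum_m: "(\<Sum>m<L. real m) = real L * (real L - 1) / 2"
  by (induction L) (auto simp: field_simps)

lemma exp_runtime_SS: "exp_runtime n l p = (\<Sum>m<n div l. inverse ((1 - p m) ^ (m * l)) * SS l (p m))"
  unfolding exp_runtime_def SS_def by simp

lemma runtime_lower:
  assumes "\<forall>m<n div l. 0 < p m \<and> p m < 1"
  shows "exp 1 * s_BLO l * real l / 2 * (real (n div l) * (real (n div l) - 1) / 2) \<le> exp_runtime n l p"
proof -
  have "exp 1 * s_BLO l * real l / 2 * (real (n div l) * (real (n div l) - 1) / 2)
      = (\<Sum>m<n div l. exp 1 * s_BLO l * real (m * l) / 2)"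
  proof -
    have "(\<Sum>m<n div l. exp 1 * s_BLO l * real (m * l) / 2) = exp 1 * s_BLO l * real l / 2 * (\<Sum>m<n div l. real m)"
      by (simp add: sum_distrib_left mult_ac)
    thus ?thesis by (simp add: sum_m)
  qed
  also have "\<dots> \<le> exp_runtime n l p" unfolding exp_runtime_SS
  proof (rule sum_mono)
    fix m assume "m \<in> {..<n div l}"
    hence "0 < p m" "p m < 1" using assms by auto
    from term_lower[OF this, of l "m * l"]
    show "exp 1 * s_BLO l * real (m * l) / 2 \<le> inverse ((1 - p m) ^ (m * l)) * SS l (p m)" .
  qed
  finally show ?thesis .
qed

lemma runtime_upper:
  assumes "l \<ge> 1"
  shows "exp_runtime n l (\<lambda>m. 1 / (real (m * l) + 2))
     \<le> exp 1 * s_BLO l / 2 * (real l * (real (n div l) * (real (n div l) - 1) / 2) + real (n div l) * (2 + 2 * real l))"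
proof -
  have s: "s_BLO l \<ge> 0" unfolding s_BLO_def by (intro sum_nonneg) auto
  have "exp_runtime n l (\<lambda>m. 1 / (real (m * l) + 2)) \<le> (\<Sum>m<n div l. exp 1 * s_BLO l / 2 * (real l * real m + (2 + 2 * real l)))"
    unfolding exp_runtime_SS
  proof (rule sum_mono)
    fix m
    define p where "p = 1 / (real (m * l) + 2)"
    have d: "real (m*l) + 2 \<ge> 2" by simp
    have p1: "0 < p" unfolding p_def by (simp add: add_nonneg_pos)
    have p2: "p \<le> 1/2" unfolding p_def by (intro divide_left_mono) (simp_all add: add_nonneg_pos)
    note p = p1 p2
    have i: "inverse ((1 - p) ^ (m * l)) \<le> exp 1" unfolding p_def by (rule inv_pow_le)
    have i0: "inverse ((1 - p) ^ (m * l)) \<ge> 0" using p by auto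
    have S: "SS l p \<le> s_BLO l * (1 / (2 * p) + real l)" by (rule SS_upper) (use p assms in auto)
    have S0: "0 \<le> s_BLO l * (1 / (2 * p) + real l)" using s p by auto
    have "inverse ((1 - p) ^ (m * l)) * SS l p \<le> exp 1 * (s_BLO l * (1 / (2 * p) + real l))"
    proof (rule mult_mono[OF i S])
      have "0 \<le> s_BLO l / (2 * p)" using s p by simp
      also have "\<dots> \<le> SS l p" by (rule SS_lower) (use p in auto)
      finally show "0 \<le> SS l p" .
    qed simp
    also have "\<dots> = exp 1 * s_BLO l / 2 * (real l * real m + (2 + 2 * real l))"
      unfolding p_def by (simp add: field_simps)
    finally show "inverse ((1 - 1 / (real (m * l) + 2)) ^ (m * l)) * SS l (1 / (real (m * l) + 2))
      \<le> exp 1 * s_BLO l / 2 * (real l * real m + (2 + 2 * real l))" unfolding p_def .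
  qed
  also have "\<dots> = exp 1 * s_BLO l / 2 * (real l * (real (n div l) * (real (n div l) - 1) / 2) + real (n div l) * (2 + 2 * real l))"
  proof -
    have "(\<Sum>m<n div l. exp 1 * s_BLO l / 2 * (real l * real m + (2 + 2 * real l))) = exp 1 * s_BLO l / 2 * real l * (\<Sum>m<n div l. real m) + exp 1 * s_BLO l / 2 * real (n div l) * (2 + 2 * real l)"
    proof -
      have "(\<Sum>m<n div l. exp 1 * s_BLO l / 2 * (real l * real m + (2 + 2 * real l))) = (\<Sum>m<n div l. exp 1 * s_BLO l / 2 * real l * real m + exp 1 * s_BLO l / 2 * (2 + 2 * real l))"
        by (rule sum.cong) (simp_all add: algebra_simps)
      also have "\<dots> = exp 1 * s_BLO l / 2 * real l * (\<Sum>m<n div l. real m) + exp 1 * s_BLO l / 2 * real (n div l) * (2 + 2 * real l)"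
        unfolding sum.distrib sum_distrib_left[symmetric] by (simp add: algebra_simps)
      finally show ?thesis .
    qed
    thus ?thesis by (simp add: sum_m algebra_simps)
  qed
  finally show ?thesis .
qed

lemma T_opt_bounds:
  assumes "l \<ge> 1"
  shows "exp 1 * s_BLO l * real l / 2 * (real (n div l) * (real (n div l) - 1) / 2) \<le> T_opt n l"
    and "T_opt n l \<le> exp 1 * s_BLO l / 2 * (real l * (real (n div l) * (real (n div l) - 1) / 2) + real (n div l) * (2 + 2 * real l))"
proof -
  let ?X = "{exp_runtime n l p | p. \<forall>m<n div l. 0 < p m \<and> p m < 1}"
  have aux: "0 < 1 / (real (m * l) + 2) \<and> 1 / (real (m * l) + 2) < 1" for m
  proof -
    have d: "real (m*l) + 2 \<ge> 2" by simp
    have "1 / (real (m * l) + 2) \<le> 1 / 2" by (intro divide_left_mono) (simp_all add: add_nonneg_pos)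
    thus ?thesis by (simp add: add_nonneg_pos add_pos_nonneg)
  qed
  have mem: "exp_runtime n l (\<lambda>m. 1 / (real (m * l) + 2)) \<in> ?X"
    using aux by blast
  have lb: "\<forall>x\<in>?X. exp 1 * s_BLO l * real l / 2 * (real (n div l) * (real (n div l) - 1) / 2) \<le> x"
    using runtime_lower by blast
  show "exp 1 * s_BLO l * real l / 2 * (real (n div l) * (real (n div l) - 1) / 2) \<le> T_opt n l"
    unfolding T_opt_def using mem lb by (intro cInf_greatest) blast+
  have bdd: "bdd_below ?X" unfolding bdd_below_def using lb by blast
  have "T_opt n l \<le> exp_runtime n l (\<lambda>m. 1 / (real (m * l) + 2))"
    unfolding T_opt_def by (rule cInf_lower[OF mem bdd])
  also have "\<dots> \<le> exp 1 * s_BLO l / 2 * (real l * (real (n div l) * (real (n div l) - 1) / 2) + real (n div l) * (2 + 2 * real l))" by (rule runtime_upper[OF assms])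
  finally show "T_opt n l \<le> exp 1 * s_BLO l / 2 * (real l * (real (n div l) * (real (n div l) - 1) / 2) + real (n div l) * (2 + 2 * real l))" .
qed

lemma ratio_bounds:
  assumes l: "l \<ge> 1" and dv: "l dvd n" and n: "n > 0"
  defines "g \<equiv> exp 1 / 2 * (b_BLO l * 2 ^ l / real l) * real n ^ 2"
  shows "1 - 1 / real (n div l) \<le> T_opt n l / g \<and> T_opt n l / g \<le> 1 + 7 / real (n div l)"
proof -
  define L where "L = n div l"
  define s where "s = s_BLO l"
  have nL: "n = L * l" using dv unfolding L_def by simp
  have L1: "L \<ge> 1" using n nL by (cases L) auto
  have s1: "s \<ge> 1" using s_ge[OF l] l unfolding s_def by linarith
  have "b_BLO l * 2 ^ l = s / 2" unfolding b_BLO_def s_def by (simp add: field_simps)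
  hence gL: "g = exp 1 * s * real L ^ 2 * real l / 4" unfolding g_def nL using l
    by (simp add: field_simps power2_eq_square)
  have gpos: "g > 0" unfolding gL using s1 L1 l by simp
  have "g * (1 - 1 / real L) = exp 1 * s * real l / 2 * (real L * (real L - 1) / 2)"
    unfolding gL using L1 by (simp add: field_simps power2_eq_square)
  also have "\<dots> \<le> T_opt n l" unfolding s_def L_def by (rule T_opt_bounds(1)[OF l])
  finally have lo: "g * (1 - 1 / real L) \<le> T_opt n l" .
  have "T_opt n l \<le> exp 1 * s / 2 * (real l * (real L * (real L - 1) / 2) + real L * (2 + 2 * real l))"
    unfolding s_def L_def by (rule T_opt_bounds(2)[OF l])
  also have "\<dots> = g * (1 + 7 / real L) - exp 1 * s * real L * (real l - 1)"
    unfolding gL using L1 by (simp add: field_simps power2_eq_square)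
  also have "\<dots> \<le> g * (1 + 7 / real L)"
    using s1 L1 l by (simp add: mult_nonneg_nonneg)
  finally have up: "T_opt n l \<le> g * (1 + 7 / real L)" .
  have a: "1 - 1 / real L \<le> T_opt n l / g"
    unfolding pos_le_divide_eq[OF gpos] by (subst mult.commute) (rule lo)
  have b: "T_opt n l / g \<le> 1 + 7 / real L"
    unfolding pos_divide_le_eq[OF gpos] by (subst mult.commute) (rule up)
  show ?thesis unfolding L_def[symmetric] using a b by blast
qed

theorem mainTheorem10:
  fixes n l :: "nat \<Rightarrow> nat"
  assumes "filterlim n at_top sequentially"
    and "\<And>k. l k \<ge> 1"
    and "\<And>k. l k dvd n k"
    and "(\<lambda>k. real (l k) / real (n k)) \<longlonglongrightarrow> 0"
  shows "(\<lambda>k. T_opt (n k) (l k)) \<sim>[sequentially]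
         (\<lambda>k. exp 1 / 2 * (b_BLO (l k) * 2 ^ l k / real (l k)) * real (n k) ^ 2)"
proof (rule asymp_equivI')
  define L where "L k = n k div l k" for k
  have ev: "eventually (\<lambda>k. n k \<ge> 1) sequentially"
    using assms(1) unfolding filterlim_at_top by blast
  have ev2: "eventually (\<lambda>k. 1 / real (L k) = real (l k) / real (n k)) sequentially"
    using ev
  proof (rule eventually_mono)
    fix k assume "n k \<ge> 1"
    have "n k = L k * l k" using assms(3)[of k] unfolding L_def by simp
    thus "1 / real (L k) = real (l k) / real (n k)" using assms(2)[of k] by simp
  qed
  have z: "(\<lambda>k. 1 / real (L k)) \<longlonglongrightarrow> 0"
    using tendsto_cong[OF ev2] assms(4) by blast
  have t1: "(\<lambda>k. 1 - 1 / real (L k)) \<longlonglongrightarrow> 1"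
    using tendsto_diff[OF tendsto_const z, of 1] by simp
  have t2: "(\<lambda>k. 1 + 7 / real (L k)) \<longlonglongrightarrow> 1"
    using tendsto_add[OF tendsto_const tendsto_mult[OF tendsto_const z], of 1 7] by simp
  have rb: "eventually (\<lambda>k. 1 - 1 / real (L k) \<le> T_opt (n k) (l k) / (exp 1 / 2 * (b_BLO (l k) * 2 ^ l k / real (l k)) * real (n k) ^ 2)
      \<and> T_opt (n k) (l k) / (exp 1 / 2 * (b_BLO (l k) * 2 ^ l k / real (l k)) * real (n k) ^ 2) \<le> 1 + 7 / real (L k)) sequentially"
    using ev
  proof (rule eventually_mono)
    fix k assume "n k \<ge> 1"
    hence "n k > 0" by simp
    from ratio_bounds[OF assms(2)[of k] assms(3)[of k] this]
    show "1 - 1 / real (L k) \<le> T_opt (n k) (l k) / (exp 1 / 2 * (b_BLO (l k) * 2 ^ l k / real (l k)) * real (n k) ^ 2)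
      \<and> T_opt (n k) (l k) / (exp 1 / 2 * (b_BLO (l k) * 2 ^ l k / real (l k)) * real (n k) ^ 2) \<le> 1 + 7 / real (L k)"
      unfolding L_def .
  qed
  show "((\<lambda>k. T_opt (n k) (l k) / (exp 1 / 2 * (b_BLO (l k) * 2 ^ l k / real (l k)) * real (n k) ^ 2)) \<longlongrightarrow> 1) sequentially"
    by (rule tendsto_sandwich[OF eventually_mono[OF rb conjunct1] eventually_mono[OF rb conjunct2] t1 t2])
qed

end
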